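(* Let $D,D'$ be $n$-dimensional $(L,A)$-quasidisks in a metric space $X$ with $d_H(\partial D,\partial D')\le A_1$ and $D\subset N_{A_2}(D')$. Then there is $C$ depending only on $L,A,A_1,A_2,n$ such that $d_H(D,D')\le C$.
   Context: An $n$-dimensional $(L,A)$-quasidisk is the image $D=q(B)$ of an $(L,A)$-quasi-isometric embedding $q$ of a closed metric ball $B\subset\mathbb R^n$ into $X$ (i.e. $L^{-1}|x-y|-A\le d(q x,q y)\le L|x-y|+A$); its boundary is $\partial D=q(\partial B)$. $d_H$ is Hausdorff distance and $N_r$ the open $r$-neighborhood. *)

theory Defs
  imports "HOL-Analysis.Analysis"
begin

definition qi_embedding ::
  "'a set \<Rightarrow> ('a \<Rightarrow> 'a \<Rightarrow> real) \<Rightarrow> real \<Rightarrow> real \<Rightarrow> (real^'n \<Rightarrow> 'a) \<Rightarrow> real^'n \<Rightarrow> real \<Rightarrow> bool" where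
  "qi_embedding M d L A q c r \<longleftrightarrow>
     q ` cball c r \<subseteq> M \<and>
     (\<forall>x\<in>cball c r. \<forall>y\<in>cball c r.
        dist x y / L - A \<le> d (q x) (q y) \<and> d (q x) (q y) \<le> L * dist x y + A)"

definition setdist_e :: "('a \<Rightarrow> 'a \<Rightarrow> real) \<Rightarrow> 'a \<Rightarrow> 'a set \<Rightarrow> ereal" where
  "setdist_e d x T = (INF t\<in>T. ereal (d x t))"

definition hausdorff_dist_e :: "('a \<Rightarrow> 'a \<Rightarrow> real) \<Rightarrow> 'a set \<Rightarrow> 'a set \<Rightarrow> ereal" where
  "hausdorff_dist_e d S T = max (SUP s\<in>S. setdist_e d s T) (SUP t\<in>T. setdist_e d t S)"

definition nbhd :: "'a set \<Rightarrow> ('a \<Rightarrow> 'a \<Rightarrow> real) \<Rightarrow> real \<Rightarrow> 'a set \<Rightarrow> 'a set" where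
  "nbhd M d r T = {x\<in>M. \<exists>y\<in>T. d x y < r}"

end

theory Submission imports Defs begin

lemma coarse_approx:
  fixes g :: "'a::euclidean_space \<Rightarrow> 'b::real_normed_vector"
  assumes S: "compact S" and K: "convex K" "g ` S \<subseteq> K"
    and E: "\<And>x y. x\<in>S \<Longrightarrow> y\<in>S \<Longrightarrow> dist x y < 1 \<Longrightarrow> dist (g x) (g y) \<le> E"
  obtains h where "continuous_on S h" "h ` S \<subseteq> K" "\<And>x. x\<in>S \<Longrightarrow> dist (h x) (g x) \<le> E"
proof -
  obtain Z where Z: "Z \<subseteq> S" "finite Z" "S \<subseteq> (\<Union>z\<in>Z. ball z (1/2))"
    by (rule compactE_image[OF S, of S "\<lambda>z. ball z (1/2)"]) auto
  define \<phi> where "\<phi> z x = max 0 (1/2 - dist x z)" for z x :: 'a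
  define s where "s x = (\<Sum>z\<in>Z. \<phi> z x)" for x
  define h where "h x = inverse (s x) *\<^sub>R (\<Sum>z\<in>Z. \<phi> z x *\<^sub>R g z)" for x
  have phi0: "\<phi> z x \<ge> 0" for z x by (simp add: \<phi>_def)
  have spos: "s x > 0" if "x \<in> S" for x
  proof -
    from Z(3) that obtain z where z: "z \<in> Z" "dist z x < 1/2" by auto
    have "\<phi> z x > 0" using z by (simp add: \<phi>_def dist_commute)
    moreover have "\<phi> z x \<le> s x" unfolding s_def
      by (rule member_le_sum) (use z phi0 Z in auto)
    ultimately show ?thesis by linarith
  qed
  have contphi: "continuous_on S (\<phi> z)" for z
    unfolding \<phi>_def by (intro continuous_intros)
  have conts: "continuous_on S s" unfolding s_def
    by (intro continuous_on_sum contphi)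
  have ci: "continuous_on S (\<lambda>x. inverse (s x))"
    by (rule continuous_on_inverse[OF conts]) (use spos in force)
  have cs: "continuous_on S (\<lambda>x. \<Sum>z\<in>Z. \<phi> z x *\<^sub>R g z)"
    by (rule continuous_on_sum) (intro continuous_on_scaleR contphi continuous_on_const)
  have "continuous_on S h" unfolding h_def
    by (rule continuous_on_scaleR[OF ci cs])
  moreover have hx: "h x \<in> K \<inter> cball (g x) E" if x: "x \<in> S" for x
  proof -
    define y where "y z = (if dist x z < 1/2 then g z else g x)" for z
    have eq: "h x = (\<Sum>z\<in>Z. (\<phi> z x / s x) *\<^sub>R y z)"
      unfolding h_def scaleR_sum_right scaleR_scaleR
    proof (rule sum.cong)
      fix z assume "z \<in> Z"
      show "(inverse (s x) * \<phi> z x) *\<^sub>R g z = (\<phi> z x / s x) *\<^sub>R y z"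
      proof (cases "dist x z < 1/2")
        case True hence "y z = g z" by (simp add: y_def)
        thus ?thesis by (simp only: divide_inverse_commute)
      next
        case False hence "\<phi> z x = 0" unfolding \<phi>_def by linarith
        thus ?thesis by simp
      qed
    qed simp
    show ?thesis unfolding eq
    proof (rule convex_sum)
      show "convex (K \<inter> cball (g x) E)" using K by (simp add: convex_Int)
      have "(\<Sum>i\<in>Z. \<phi> i x / s x) = s x / s x"
        unfolding s_def by (rule sum_divide_distrib[symmetric])
      then show "(\<Sum>i\<in>Z. \<phi> i x / s x) = 1" using spos[OF x] by simp
      show "\<phi> i x / s x \<ge> 0" for i using spos[OF x] phi0 by simp
      show "y i \<in> K \<inter> cball (g x) E" if "i \<in> Z" for i
      proof -
        have iS: "i \<in> S" using Z that by blast
        have gx: "g x \<in> K" using K(2) x by blast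
        have gi: "g i \<in> K" using K(2) iS by blast
        have e0: "dist (g x) (g x) \<le> E" using E[OF x x] by simp
        show ?thesis
        proof (cases "dist x i < 1/2")
          case True
          hence "dist (g x) (g i) \<le> E" using E[OF x iS] by simp
          thus ?thesis using True gi by (simp add: y_def)
        next
          case False thus ?thesis using gx e0 by (simp add: y_def)
        qed
      qed
    qed (use Z in auto)
  qed
  ultimately show ?thesis
    by (intro that[of h]) (auto simp: dist_commute)
qed


lemma key:
  fixes p s :: "real^'n \<Rightarrow> real^'n"
  assumes rp: "r > 0" "r' > 0"
  and pB: "p ` cball c r \<subseteq> cball c' r'"
  and pc: "\<And>a b. a \<in> cball c r \<Longrightarrow> b \<in> cball c r \<Longrightarrow> dist (p a) (p b) \<le> \<alpha> * dist a b + \<beta>"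
  and sB: "s ` sphere c' r' \<subseteq> cball c r"
  and sc: "\<And>a b. a \<in> sphere c' r' \<Longrightarrow> b \<in> sphere c' r' \<Longrightarrow> dist (s a) (s b) \<le> ga * dist a b + gb"
  and ps: "\<And>y. y \<in> sphere c' r' \<Longrightarrow> dist (p (s y)) y \<le> F"
  and al: "\<alpha> \<ge> 0" "ga \<ge> 0"
  and x': "x' \<in> cball c' r'"
  shows "(\<exists>w\<in>sphere c' r'. dist w x' \<le> (\<alpha>+\<beta>) + (\<alpha>*(ga+gb) + \<beta>) + F)
       \<or> (\<exists>b\<in>cball c r. dist x' (p b) \<le> \<alpha>+\<beta>)"
proof -
  define Kc where "Kc = (\<alpha>+\<beta>) + (\<alpha>*(ga+gb) + \<beta>) + F"
  let ?B = "cball c r" and ?B' = "cball c' r'" and ?S' = "sphere c' r'"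
  obtain P where P: "continuous_on ?B P" "P ` ?B \<subseteq> ?B'" "\<And>x. x\<in>?B \<Longrightarrow> dist (P x) (p x) \<le> \<alpha>+\<beta>"
  proof (rule coarse_approx[of ?B ?B' p "\<alpha>+\<beta>"])
    fix x y assume "x \<in> ?B" "y \<in> ?B" "dist x y < 1"
    moreover have "\<alpha> * dist x y \<le> \<alpha>" using al \<open>dist x y < 1\<close>
      by (simp add: mult_left_le)
    ultimately show "dist (p x) (p y) \<le> \<alpha>+\<beta>" using pc[of x y] by linarith
  qed (use pB in auto)
  obtain S0 where S0: "continuous_on ?S' S0" "S0 ` ?S' \<subseteq> ?B" "\<And>x. x\<in>?S' \<Longrightarrow> dist (S0 x) (s x) \<le> ga+gb"
  proof (rule coarse_approx[of ?S' ?B s "ga+gb"])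
    fix x y assume "x \<in> ?S'" "y \<in> ?S'" "dist x y < 1"
    moreover have "ga * dist x y \<le> ga" using al \<open>dist x y < 1\<close>
      by (simp add: mult_left_le)
    ultimately show "dist (s x) (s y) \<le> ga+gb" using sc[of x y] by linarith
  qed (use sB in auto)
  obtain S1 where S1: "continuous_on ?B' S1" "S1 ` ?B' \<subseteq> ?B" "\<And>x. x \<in> ?S' \<Longrightarrow> S1 x = S0 x"
  proof (rule Dugundji[of ?B ?B' ?S' S0])
    show "?B \<noteq> {}" using rp by auto
    show "closedin (top_of_set ?B') ?S'" by (rule closed_subset) auto
  qed (use S0 in auto)
  define G where "G = P \<circ> S1"
  have Gc: "continuous_on ?B' G" unfolding G_def
    by (rule continuous_on_compose[OF S1(1) continuous_on_subset[OF P(1) S1(2)]])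
  have GB: "G y \<in> ?B'" if "y \<in> ?B'" for y
    using S1(2) P(2) that unfolding G_def by (simp add: image_subset_iff)
  have Gs: "dist (G y) y \<le> Kc" if y: "y \<in> ?S'" for y
  proof -
    have yB: "y \<in> ?B'" using y by auto
    have s1: "S1 y \<in> ?B" using S1(2) yB by blast
    have sy: "s y \<in> ?B" using sB y by blast
    have "dist (G y) (p (S1 y)) \<le> \<alpha>+\<beta>" unfolding G_def using P(3)[OF s1] by simp
    moreover have "dist (p (S1 y)) (p (s y)) \<le> \<alpha>*(ga+gb) + \<beta>"
    proof -
      have "dist (S1 y) (s y) \<le> ga+gb" using S0(3)[OF y] S1(3)[OF y] by simp
      hence "\<alpha> * dist (S1 y) (s y) \<le> \<alpha>*(ga+gb)" using al by (simp add: mult_left_mono)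
      thus ?thesis using pc[OF s1 sy] by linarith
    qed
    moreover have "dist (p (s y)) y \<le> F" using ps[OF y] .
    ultimately show ?thesis unfolding Kc_def
      by (smt (verit) dist_triangle)
  qed
  show ?thesis
  proof (cases "\<exists>w\<in>?S'. dist w x' \<le> Kc")
    case True thus ?thesis unfolding Kc_def by blast
  next
    case False
    hence far: "\<And>w. w \<in> ?S' \<Longrightarrow> dist w x' > Kc" by force
    have Kc0: "Kc \<ge> 0"
    proof -
      obtain w where "w \<in> ?S'" using rp sphere_eq_empty[of c' r'] by fastforce
      thus ?thesis using Gs[of w] by (smt (verit) zero_le_dist)
    qed
    define R0 where "R0 = 3*r' + Kc"
    have R0: "R0 > r'" using rp Kc0 unfolding R0_def by linarith
    define Ann where "Ann = cball c' R0 - ball c' r'"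
    define E0 where "E0 = ?S' \<union> sphere c' R0"
    define D0 where "D0 y = (if y \<in> ?B' then G y - y else 0)" for y
    have D0c: "continuous_on E0 D0" unfolding E0_def D0_def
    proof (rule continuous_on_cases)
      show "continuous_on ?S' (\<lambda>y. G y - y)"
        by (intro continuous_intros continuous_on_subset[OF Gc]) auto
      show "\<forall>x. x \<in> ?S' \<and> x \<notin> ?B' \<or> x \<in> sphere c' R0 \<and> x \<in> ?B' \<longrightarrow> G x - x = 0"
        using R0 by auto
    qed auto
    have D0K: "D0 ` E0 \<subseteq> cball 0 Kc"
    proof
      fix v assume "v \<in> D0 ` E0"
      then obtain y where y: "y \<in> E0" "v = D0 y" by auto
      show "v \<in> cball 0 Kc"
      proof (cases "y \<in> ?B'")
        case True
        hence "y \<in> ?S'" using y(1) R0 unfolding E0_def by auto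
        thus ?thesis using Gs[of y] True y(2) unfolding D0_def by (simp add: dist_norm norm_minus_commute)
      next
        case False thus ?thesis using y(2) Kc0 unfolding D0_def by simp
      qed
    qed
    obtain D1 where D1: "continuous_on Ann D1" "D1 ` Ann \<subseteq> cball 0 Kc" "\<And>y. y \<in> E0 \<Longrightarrow> D1 y = D0 y"
    proof (rule Dugundji[OF convex_cball _ _ D0c D0K])
      show "cball 0 Kc \<noteq> {}" using Kc0 by auto
      show "closedin (top_of_set Ann) E0"
        by (rule closed_subset) (use R0 in \<open>auto simp: E0_def Ann_def\<close>)
    qed auto
    define G2 where "G2 y = (if y \<in> ?B' then G y else y + D1 y)" for y
    have G2c: "continuous_on (?B' \<union> Ann) G2" unfolding G2_def
    proof (rule continuous_on_cases)
      show "closed Ann" unfolding Ann_def by (intro closed_Diff) auto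
      show "continuous_on Ann (\<lambda>y. y + D1 y)" by (intro continuous_intros D1(1))
      show "\<forall>x. x \<in> ?B' \<and> x \<notin> ?B' \<or> x \<in> Ann \<and> x \<in> ?B' \<longrightarrow> G x = x + D1 x"
      proof (intro allI impI)
        fix x assume "x \<in> ?B' \<and> x \<notin> ?B' \<or> x \<in> Ann \<and> x \<in> ?B'"
        hence x: "x \<in> Ann" "x \<in> ?B'" by auto
        hence "x \<in> E0" "x \<in> ?S'" unfolding Ann_def E0_def by auto
        thus "G x = x + D1 x" using D1(3) x unfolding D0_def by simp
      qed
    qed (use Gc in auto)
    have U: "?B' \<union> Ann = cball c' R0" unfolding Ann_def using R0 by auto
    have "\<exists>z\<in>cball c' R0. G2 z = x'"
    proof (rule brouwer_surjective_cball[of c' R0 G2 x' "{x'}"])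
      show "continuous_on (cball c' R0) G2" using G2c U by simp
      show "R0 > 0" using R0 rp by linarith
      fix x y assume "x \<in> {x'}" "y \<in> cball c' R0"
      hence xx: "x = x'" and y: "y \<in> cball c' R0" by auto
      have "norm (y - G2 y) \<le> max (2*r') Kc"
      proof (cases "y \<in> ?B'")
        case True
        have "norm (y - G y) \<le> dist y c' + dist c' (G y)"
          by (metis dist_norm dist_triangle)
        also have "\<dots> \<le> 2*r'" using True GB[OF True] by (simp add: dist_commute)
        finally show ?thesis using True unfolding G2_def by simp
      next
        case False
        hence "y \<in> Ann" using y unfolding Ann_def by auto
        hence "D1 y \<in> cball 0 Kc" using D1(2) by blast
        hence "norm (D1 y) \<le> Kc" by simp
        thus ?thesis using False unfolding G2_def by simp
      qed
      moreover have "dist c' x' \<le> r'" using x' by simp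
      moreover have "dist c' (x' + (y - G2 y)) \<le> dist c' x' + dist x' (x' + (y - G2 y))"
        by (rule dist_triangle)
      moreover have "dist x' (x' + (y - G2 y)) = norm (y - G2 y)"
        by (simp add: dist_norm norm_minus_commute)
      moreover have "max (2*r') Kc \<le> 2*r' + Kc" using Kc0 rp by simp
      ultimately have "dist c' (x' + (y - G2 y)) \<le> R0" unfolding R0_def
        by linarith
      thus "x + (y - G2 y) \<in> cball c' R0" using xx by simp
    qed simp
    then obtain z where z: "z \<in> cball c' R0" "G2 z = x'" by blast
    show ?thesis
    proof (cases "z \<in> ?B'")
      case True
      hence "x' = P (S1 z)" using z unfolding G2_def G_def by simp
      moreover have "S1 z \<in> ?B" using S1(2) True by blast
      ultimately show ?thesis using P(3) by blast
    next
      case False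
      hence zA: "z \<in> Ann" using z unfolding Ann_def by auto
      hence "D1 z \<in> cball 0 Kc" using D1(2) by blast
      hence dz: "dist z x' \<le> Kc" using z(2) False unfolding G2_def
        by (auto simp: dist_norm)
      define f where "f t = dist c' (x' + t *\<^sub>R (z - x'))" for t :: real
      have "\<exists>t. 0 \<le> t \<and> t \<le> 1 \<and> f t = r'"
      proof (rule IVT')
        show "f 0 \<le> r'" using x' by (simp add: f_def)
        show "r' \<le> f 1" using False by (simp add: f_def)
        show "continuous_on {0..1} f" unfolding f_def by (intro continuous_intros)
      qed simp
      then obtain t where t: "0 \<le> t" "t \<le> 1" "f t = r'" by blast
      define w where "w = x' + t *\<^sub>R (z - x')"
      have "w \<in> ?S'" using t unfolding w_def f_def by simp
      moreover have "dist w x' = t * dist z x'" unfolding w_def using t by (simp add: dist_norm)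
      hence "dist w x' \<le> Kc" using t dz Kc0
        by (smt (verit) mult_left_le_one_le zero_le_dist)
      ultimately show ?thesis using far by force
    qed
  qed
qed

lemma qi_lower:
  assumes "qi_embedding M d L A q c r" "L \<ge> 1" "x \<in> cball c r" "y \<in> cball c r"
  shows "dist x y \<le> L * (d (q x) (q y) + A)"
proof -
  have "dist x y / L - A \<le> d (q x) (q y)" using assms unfolding qi_embedding_def by blast
  hence "dist x y / L \<le> d (q x) (q y) + A" by linarith
  thus ?thesis using assms(2) by (simp add: divide_le_eq mult.commute)
qed

lemma qi_upper:
  assumes "qi_embedding M d L A q c r" "x \<in> cball c r" "y \<in> cball c r"
  shows "d (q x) (q y) \<le> L * dist x y + A"
  using assms unfolding qi_embedding_def by blast

lemma qi_M:
  assumes "qi_embedding M d L A q c r" "x \<in> cball c r"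
  shows "q x \<in> M"
  using assms unfolding qi_embedding_def by blast

lemma coarse_aux:
  fixes L D A X Y :: real
  assumes "L \<ge> 1" "X \<le> L * (D + A)" "D \<le> Z + L * Y + A"
  shows "X \<le> L * L * Y + L * (Z + 2*A)"
proof -
  have "L * (D + A) \<le> L * (Z + L*Y + A + A)" using assms by (intro mult_left_mono) auto
  also have "\<dots> = L * L * Y + L * (Z + 2*A)" by (simp add: algebra_simps)
  finally show ?thesis using assms by linarith
qed

theorem lemma10p2:
  fixes L A A1 A2 :: real
  assumes "L \<ge> 1" and "A \<ge> 0"
  shows "\<exists>C::real. \<forall>(M::'a set) d (q::real^'n \<Rightarrow> 'a) c r (q'::real^'n \<Rightarrow> 'a) c' r'.
     Metric_space M d \<and> r > 0 \<and> r' > 0 \<and>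
     qi_embedding M d L A q c r \<and> qi_embedding M d L A q' c' r' \<and>
     hausdorff_dist_e d (q ` sphere c r) (q' ` sphere c' r') \<le> ereal A1 \<and>
     q ` cball c r \<subseteq> nbhd M d A2 (q' ` cball c' r')
     \<longrightarrow> hausdorff_dist_e d (q ` cball c r) (q' ` cball c' r') \<le> ereal C"
proof -
  note L = assms(1)
  define \<alpha> where "\<alpha> = L*L"
  define \<beta> where "\<beta> = L*(2*A2 + 2*A)"
  define \<beta>2 where "\<beta>2 = L*(2*(A1+1) + 2*A)"
  define F where "F = L*(A2 + (A1+1) + A)"
  define Kc where "Kc = (\<alpha>+\<beta>) + (\<alpha>*(\<alpha>+\<beta>2) + \<beta>) + F"
  define C where "C = max A2 (max (L*Kc + A + (A1+1)) (L*(\<alpha>+\<beta>) + A + A2))"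
  show ?thesis
  proof (rule exI[of _ C], intro allI impI)
    fix M d and q :: "real^'n \<Rightarrow> 'a" and c r and q' :: "real^'n \<Rightarrow> 'a" and c' r'
    assume H: "Metric_space M d \<and> r > 0 \<and> r' > 0 \<and>
     qi_embedding M d L A q c r \<and> qi_embedding M d L A q' c' r' \<and>
     hausdorff_dist_e d (q ` sphere c r) (q' ` sphere c' r') \<le> ereal A1 \<and>
     q ` cball c r \<subseteq> nbhd M d A2 (q' ` cball c' r')"
    hence ms: "Metric_space M d" and rp: "r > 0" "r' > 0"
      and qi: "qi_embedding M d L A q c r" and qi': "qi_embedding M d L A q' c' r'"
      and hd: "hausdorff_dist_e d (q ` sphere c r) (q' ` sphere c' r') \<le> ereal A1"
      and sub: "q ` cball c r \<subseteq> nbhd M d A2 (q' ` cball c' r')" by auto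
    note tri = Metric_space.triangle[OF ms]
    note com = Metric_space.commute[OF ms]
    let ?B = "cball c r" and ?B' = "cball c' r'" and ?S = "sphere c r" and ?S' = "sphere c' r'"
    have qM: "x \<in> ?B \<Longrightarrow> q x \<in> M" for x using qi_M[OF qi] .
    have q'M: "x \<in> ?B' \<Longrightarrow> q' x \<in> M" for x using qi_M[OF qi'] .
    have "\<forall>x\<in>?B. \<exists>y. y \<in> ?B' \<and> d (q x) (q' y) < A2"
      using sub unfolding nbhd_def by blast
    from bchoice[OF this] obtain p where p0: "\<forall>x\<in>?B. p x \<in> ?B' \<and> d (q x) (q' (p x)) < A2"
      by blast
    have p: "\<And>x. x \<in> ?B \<Longrightarrow> p x \<in> ?B' \<and> d (q x) (q' (p x)) < A2" using p0 by blast
    have hd2: "(SUP t\<in>q'`?S'. setdist_e d t (q`?S)) \<le> ereal A1"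
      using hd unfolding hausdorff_dist_e_def by simp
    have "\<forall>y\<in>?S'. \<exists>x. x \<in> ?S \<and> d (q' y) (q x) < A1 + 1"
    proof
      fix y assume y: "y \<in> ?S'"
      have "setdist_e d (q' y) (q`?S) \<le> ereal A1"
        using y hd2 by (meson SUP_upper imageI order_trans)
      also have "\<dots> < ereal (A1+1)" by simp
      finally have "(INF t\<in>q`?S. ereal (d (q' y) t)) < ereal (A1+1)"
        unfolding setdist_e_def by simp
      then obtain t where "t \<in> q`?S" "ereal (d (q' y) t) < ereal (A1+1)"
        by (auto simp: INF_less_iff)
      thus "\<exists>x. x \<in> ?S \<and> d (q' y) (q x) < A1 + 1" by auto
    qed
    from bchoice[OF this] obtain s where s0: "\<forall>y\<in>?S'. s y \<in> ?S \<and> d (q' y) (q (s y)) < A1 + 1"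
      by blast
    have s: "\<And>y. y \<in> ?S' \<Longrightarrow> s y \<in> ?S \<and> d (q' y) (q (s y)) < A1 + 1" using s0 by blast
    have sB: "s y \<in> ?B" if "y \<in> ?S'" for y using s[OF that] by auto
    have pd: "d (q x) (q' (p x)) < A2" if "x \<in> ?B" for x using p[OF that] by blast
    have sd: "d (q' y) (q (s y)) < A1 + 1" if "y \<in> ?S'" for y using s[OF that] by blast
    have C1: "L*Kc + A + (A1+1) \<le> C" and C2: "L*(\<alpha>+\<beta>) + A + A2 \<le> C"
      unfolding C_def by auto
    have main: "\<exists>b\<in>?B. d (q' x') (q b) \<le> C" if x': "x' \<in> ?B'" for x'
    proof -
      have "(\<exists>w\<in>?S'. dist w x' \<le> (\<alpha>+\<beta>) + (\<alpha>*(\<alpha>+\<beta>2) + \<beta>) + F)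
          \<or> (\<exists>b\<in>?B. dist x' (p b) \<le> \<alpha>+\<beta>)"
      proof (rule key[OF rp, where p=p and s=s and ga=\<alpha>])
        show "p ` ?B \<subseteq> ?B'" using p by blast
        show "s ` ?S' \<subseteq> ?B" using sB by blast
        show "0 \<le> \<alpha>" unfolding \<alpha>_def using L by simp
        show "x' \<in> ?B'" by fact
        show "dist (p a) (p b) \<le> \<alpha> * dist a b + \<beta>" if a: "a \<in> ?B" and b: "b \<in> ?B" for a b
        proof -
          have pa: "p a \<in> ?B'" and pb: "p b \<in> ?B'" using p a b by auto
          have "d (q' (p a)) (q' (p b)) \<le> d (q' (p a)) (q a) + d (q a) (q' (p b))"
            using tri[OF q'M[OF pa] qM[OF a] q'M[OF pb]] .
          also have "\<dots> \<le> d (q' (p a)) (q a) + (d (q a) (q b) + d (q b) (q' (p b)))"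
            using add_left_mono[OF tri[OF qM[OF a] qM[OF b] q'M[OF pb]]] .
          finally have "d (q' (p a)) (q' (p b)) \<le> 2*A2 + L * dist a b + A"
            using pd[OF a] pd[OF b] qi_upper[OF qi a b] com[of "q' (p a)" "q a"] by linarith
          from coarse_aux[OF L qi_lower[OF qi' L pa pb] this]
          show ?thesis unfolding \<alpha>_def \<beta>_def by simp
        qed
        show "dist (s a) (s b) \<le> \<alpha> * dist a b + \<beta>2" if a: "a \<in> ?S'" and b: "b \<in> ?S'" for a b
        proof -
          have a': "a \<in> ?B'" and b': "b \<in> ?B'" using a b by auto
          have sa: "s a \<in> ?B" and sb: "s b \<in> ?B" using sB a b by auto
          have "d (q (s a)) (q (s b)) \<le> d (q (s a)) (q' a) + d (q' a) (q (s b))"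
            using tri[OF qM[OF sa] q'M[OF a'] qM[OF sb]] .
          also have "\<dots> \<le> d (q (s a)) (q' a) + (d (q' a) (q' b) + d (q' b) (q (s b)))"
            using add_left_mono[OF tri[OF q'M[OF a'] q'M[OF b'] qM[OF sb]]] .
          finally have "d (q (s a)) (q (s b)) \<le> 2*(A1+1) + L * dist a b + A"
            using sd[OF a] sd[OF b] qi_upper[OF qi' a' b'] com[of "q (s a)" "q' a"] by (smt (verit))
          from coarse_aux[OF L qi_lower[OF qi L sa sb] this]
          show ?thesis unfolding \<alpha>_def \<beta>2_def by simp
        qed
        show "dist (p (s y)) y \<le> F" if y: "y \<in> ?S'" for y
        proof -
          have y': "y \<in> ?B'" using y by auto
          have sy: "s y \<in> ?B" using sB y by auto
          have psy: "p (s y) \<in> ?B'" using p sy by auto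
          have "d (q' (p (s y))) (q' y) \<le> d (q' (p (s y))) (q (s y)) + d (q (s y)) (q' y)"
            using tri[OF q'M[OF psy] qM[OF sy] q'M[OF y']] .
          hence "d (q' (p (s y))) (q' y) \<le> A2 + (A1+1)"
            using pd[OF sy] sd[OF y] com[of "q' (p (s y))" "q (s y)"] com[of "q (s y)" "q' y"] by linarith
          hence "L * (d (q' (p (s y))) (q' y) + A) \<le> L * (A2 + (A1+1) + A)"
            using L by (intro mult_left_mono) auto
          thus ?thesis using qi_lower[OF qi' L psy y'] unfolding F_def by linarith
        qed
      qed (use L in \<open>simp add: \<alpha>_def\<close>)
      thus ?thesis
      proof
        assume "\<exists>w\<in>?S'. dist w x' \<le> (\<alpha>+\<beta>) + (\<alpha>*(\<alpha>+\<beta>2) + \<beta>) + F"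
        then obtain w where w: "w \<in> ?S'" "dist w x' \<le> Kc" unfolding Kc_def by blast
        have w': "w \<in> ?B'" using w by auto
        have sw: "s w \<in> ?B" using sB w by auto
        have "d (q' x') (q (s w)) \<le> d (q' x') (q' w) + d (q' w) (q (s w))"
          using tri[OF q'M[OF x'] q'M[OF w'] qM[OF sw]] .
        moreover have "d (q' x') (q' w) \<le> L * Kc + A"
        proof -
          have "d (q' x') (q' w) \<le> L * dist x' w + A" by (rule qi_upper[OF qi' x' w'])
          moreover have "L * dist x' w \<le> L * Kc" using w(2) L by (simp add: dist_commute)
          ultimately show ?thesis by linarith
        qed
        ultimately have "d (q' x') (q (s w)) \<le> C" using sd[OF w(1)] C1 by linarith
        thus ?thesis using sw by blast
      next
        assume "\<exists>b\<in>?B. dist x' (p b) \<le> \<alpha>+\<beta>"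
        then obtain b where b: "b \<in> ?B" "dist x' (p b) \<le> \<alpha>+\<beta>" by blast
        have pb: "p b \<in> ?B'" using p b by auto
        have "d (q' x') (q b) \<le> d (q' x') (q' (p b)) + d (q' (p b)) (q b)"
          using tri[OF q'M[OF x'] q'M[OF pb] qM[OF b(1)]] .
        moreover have "d (q' x') (q' (p b)) \<le> L * (\<alpha>+\<beta>) + A"
        proof -
          have "d (q' x') (q' (p b)) \<le> L * dist x' (p b) + A" by (rule qi_upper[OF qi' x' pb])
          moreover have "L * dist x' (p b) \<le> L * (\<alpha>+\<beta>)" using b(2) L by simp
          ultimately show ?thesis by linarith
        qed
        ultimately have "d (q' x') (q b) \<le> C"
          using pd[OF b(1)] com[of "q' (p b)" "q b"] C2 by linarith
        thus ?thesis using b by blast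
      qed
    qed
    have part1: "(SUP x\<in>q`?B. setdist_e d x (q'`?B')) \<le> ereal C"
    proof (rule SUP_least)
      fix u assume "u \<in> q`?B"
      then obtain x where x: "x \<in> ?B" "u = q x" by blast
      have "setdist_e d u (q'`?B') \<le> ereal (d u (q' (p x)))"
        unfolding setdist_e_def using p[OF x(1)] by (intro INF_lower) auto
      also have "\<dots> \<le> ereal C"
      proof -
        have "A2 \<le> C" unfolding C_def by simp
        thus ?thesis using pd[OF x(1)] x(2) by simp
      qed
      finally show "setdist_e d u (q'`?B') \<le> ereal C" .
    qed
    have part2: "(SUP x\<in>q'`?B'. setdist_e d x (q`?B)) \<le> ereal C"
    proof (rule SUP_least)
      fix u assume "u \<in> q'`?B'"
      then obtain x' where x': "x' \<in> ?B'" "u = q' x'" by blast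
      obtain b where b: "b \<in> ?B" "d (q' x') (q b) \<le> C" using main[OF x'(1)] by blast
      have "setdist_e d u (q`?B) \<le> ereal (d u (q b))"
        unfolding setdist_e_def using b by (intro INF_lower) auto
      also have "\<dots> \<le> ereal C" using b x'(2) by simp
      finally show "setdist_e d u (q`?B) \<le> ereal C" .
    qed
    show "hausdorff_dist_e d (q ` ?B) (q' ` ?B') \<le> ereal C"
      unfolding hausdorff_dist_e_def using part1 part2 by simp
  qed
qed

end
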